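(* Let $\phi$ be a topological flow on a compact manifold $M$ (with a metric $\mathrm{dist}$ inducing its topology). If the limit set $L(\phi)$ is a finite set consisting of singularities of $\phi$, each of which is Lyapunov stable or Lyapunov unstable, then $\phi$ has the oriented shadowing property.
   Context: A topological flow is a continuous map $\phi:\mathbb{R}\times M\to M$ with $\phi(0,x)=x$, $\phi(s+t,x)=\phi(s,\phi(t,x))$. A singularity is a point fixed by all $\phi(t,\cdot)$. A singularity $p$ is Lyapunov stable if for every neighborhood $V$ of $p$ there is a neighborhood $U$ of $p$ with $\phi(t,x)\in V$ for all $t\ge0$, $x\in U$; Lyapunov unstable if the same holds for $t\le0$. $L(\phi)$ is the union over $x\in M$ of the $\omega$-limit and $\alpha$-limit sets of $x$. A $d$-pseudotrajectory is a map $\xi:\mathbb{R}\to M$ with $\mathrm{dist}(\xi(t+s),\phi(s,\xi(t)))<d$ for all $t\in\mathbb{R}$, $s\in[0,1]$. $\mathrm{Rep}$ is the set of orientation-preserving homeomorphisms of $\mathbb{R}$. $\phi$ has the oriented shadowing property if for every $\varepsilon>0$ there is $d>0$ such that for every $d$-pseudotrajectory $\xi$ there are $x\in M$, $h\in\mathrm{Rep}$ with $\mathrm{dist}(\xi(t),\phi(h(t),x))<\varepsilon$ for all $t\in\mathbb{R}$. *)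

theory Defs
  imports "HOL-Analysis.Analysis"
begin

text \<open>A (topological) manifold of dimension DIM('n) without boundary, as a subset M of a
metric space: every point has a neighbourhood in M homeomorphic to an open subset of
the Euclidean space 'n. (Hausdorff is automatic in a metric space; second countability
is automatic for compact metric spaces.)\<close>
definition topological_manifold :: "'n::euclidean_space itself \<Rightarrow> 'a::metric_space set \<Rightarrow> bool" where
  "topological_manifold _ M \<longleftrightarrow>
     (\<forall>x\<in>M. \<exists>U. openin (top_of_set M) U \<and> x \<in> U \<and>
        (\<exists>V::'n set. open V \<and> U homeomorphic V))"

definition topological_flow :: "(real \<Rightarrow> 'a::metric_space \<Rightarrow> 'a) \<Rightarrow> 'a set \<Rightarrow> bool" where
  "topological_flow \<phi> M \<longleftrightarrow>
     continuous_on (UNIV \<times> M) (\<lambda>(t, x). \<phi> t x) \<and>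
     (\<forall>t. \<forall>x\<in>M. \<phi> t x \<in> M) \<and>
     (\<forall>x\<in>M. \<phi> 0 x = x) \<and>
     (\<forall>s t. \<forall>x\<in>M. \<phi> (s + t) x = \<phi> s (\<phi> t x))"

definition singularity :: "(real \<Rightarrow> 'a \<Rightarrow> 'a) \<Rightarrow> 'a set \<Rightarrow> 'a \<Rightarrow> bool" where
  "singularity \<phi> M p \<longleftrightarrow> p \<in> M \<and> (\<forall>t. \<phi> t p = p)"

text \<open>Neighbourhoods of p in M are represented as traces on M of open sets of the ambient space.\<close>
definition lyapunov_stable :: "(real \<Rightarrow> 'a::metric_space \<Rightarrow> 'a) \<Rightarrow> 'a set \<Rightarrow> 'a \<Rightarrow> bool" where
  "lyapunov_stable \<phi> M p \<longleftrightarrow>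
     (\<forall>V. open V \<and> p \<in> V \<longrightarrow>
        (\<exists>U. open U \<and> p \<in> U \<and> (\<forall>x\<in>U \<inter> M. \<forall>t\<ge>0. \<phi> t x \<in> V)))"

definition lyapunov_unstable :: "(real \<Rightarrow> 'a::metric_space \<Rightarrow> 'a) \<Rightarrow> 'a set \<Rightarrow> 'a \<Rightarrow> bool" where
  "lyapunov_unstable \<phi> M p \<longleftrightarrow>
     (\<forall>V. open V \<and> p \<in> V \<longrightarrow>
        (\<exists>U. open U \<and> p \<in> U \<and> (\<forall>x\<in>U \<inter> M. \<forall>t\<le>0. \<phi> t x \<in> V)))"

definition omega_limit :: "(real \<Rightarrow> 'a::metric_space \<Rightarrow> 'a) \<Rightarrow> 'a \<Rightarrow> 'a set" where
  "omega_limit \<phi> x = {y. \<exists>t::nat \<Rightarrow> real. filterlim t at_top sequentially \<and>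
                              ((\<lambda>n. \<phi> (t n) x) \<longlongrightarrow> y) sequentially}"

definition alpha_limit :: "(real \<Rightarrow> 'a::metric_space \<Rightarrow> 'a) \<Rightarrow> 'a \<Rightarrow> 'a set" where
  "alpha_limit \<phi> x = {y. \<exists>t::nat \<Rightarrow> real. filterlim t at_bot sequentially \<and>
                              ((\<lambda>n. \<phi> (t n) x) \<longlongrightarrow> y) sequentially}"

definition limit_set :: "(real \<Rightarrow> 'a::metric_space \<Rightarrow> 'a) \<Rightarrow> 'a set \<Rightarrow> 'a set" where
  "limit_set \<phi> M = (\<Union>x\<in>M. omega_limit \<phi> x \<union> alpha_limit \<phi> x)"

definition pseudotrajectory :: "(real \<Rightarrow> 'a::metric_space \<Rightarrow> 'a) \<Rightarrow> 'a set \<Rightarrow> real \<Rightarrow> (real \<Rightarrow> 'a) \<Rightarrow> bool" where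
  "pseudotrajectory \<phi> M d \<xi> \<longleftrightarrow>
     (\<forall>t. \<xi> t \<in> M) \<and>
     (\<forall>t. \<forall>s\<in>{0..1}. dist (\<xi> (t + s)) (\<phi> s (\<xi> t)) < d)"

text \<open>Rep: orientation-preserving (i.e. monotone increasing) homeomorphisms of the real line.\<close>
definition Rep :: "(real \<Rightarrow> real) set" where
  "Rep = {h. (\<exists>g. homeomorphism UNIV UNIV h g) \<and> mono h}"

definition oriented_shadowing :: "(real \<Rightarrow> 'a::metric_space \<Rightarrow> 'a) \<Rightarrow> 'a set \<Rightarrow> bool" where
  "oriented_shadowing \<phi> M \<longleftrightarrow>
     (\<forall>\<epsilon>>0. \<exists>d>0. \<forall>\<xi>. pseudotrajectory \<phi> M d \<xi> \<longrightarrow>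
        (\<exists>x\<in>M. \<exists>h\<in>Rep. \<forall>t. dist (\<xi> t) (\<phi> (h t) x) < \<epsilon>))"

end

theory Submission
  imports Defs
begin


lemma flow_in: "topological_flow \<phi> M \<Longrightarrow> x \<in> M \<Longrightarrow> \<phi> t x \<in> M"
  unfolding topological_flow_def by blast
lemma flow_0: "topological_flow \<phi> M \<Longrightarrow> x \<in> M \<Longrightarrow> \<phi> 0 x = x"
  unfolding topological_flow_def by blast
lemma flow_add: "topological_flow \<phi> M \<Longrightarrow> x \<in> M \<Longrightarrow> \<phi> (s + t) x = \<phi> s (\<phi> t x)"
  unfolding topological_flow_def by blast
lemma flow_cont: "topological_flow \<phi> M \<Longrightarrow> continuous_on (UNIV \<times> M) (\<lambda>(t, x). \<phi> t x)"
  unfolding topological_flow_def by blast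

lemma flow_cont_t:
  assumes "topological_flow \<phi> M"
  shows "continuous_on M (\<phi> t)"
proof -
  have c: "continuous_on (UNIV \<times> M) (\<lambda>(t, x). \<phi> t x)" using assms by (simp add: topological_flow_def)
  have "continuous_on M ((\<lambda>(t, x). \<phi> t x) \<circ> (\<lambda>x. (t, x)))"
    by (rule continuous_on_compose) (auto intro!: continuous_intros continuous_on_subset[OF c])
  then show ?thesis by (simp add: o_def)
qed

lemma flow_unif:
  assumes "topological_flow \<phi> M" "compact M" "e > 0"
  shows "\<exists>\<delta>>0. \<forall>u\<in>{a..b}. \<forall>y\<in>M. \<forall>z\<in>M. dist y z < \<delta> \<longrightarrow> dist (\<phi> u y) (\<phi> u z) < e"
proof -
  have c: "continuous_on ({a..b} \<times> M) (\<lambda>(t, x). \<phi> t x)"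
    using assms by (auto simp: topological_flow_def intro: continuous_on_subset)
  have "uniformly_continuous_on ({a..b} \<times> M) (\<lambda>(t, x). \<phi> t x)"
    by (rule compact_uniformly_continuous[OF c]) (simp add: compact_Times assms)
  then obtain \<delta> where d: "\<delta> > 0" and H: "\<And>x x'. \<lbrakk>x\<in>{a..b} \<times> M; x'\<in>{a..b} \<times> M; dist x' x < \<delta>\<rbrakk> \<Longrightarrow>
      dist ((\<lambda>(t, x). \<phi> t x) x') ((\<lambda>(t, x). \<phi> t x) x) < e"
    using uniformly_continuous_onE assms(3) by blast
  show ?thesis
  proof (intro exI[of _ \<delta>] conjI d ballI impI)
    fix u y z assume "u \<in> {a..b}" "y \<in> M" "z \<in> M" "dist y z < \<delta>"
    then show "dist (\<phi> u y) (\<phi> u z) < e"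
      using H[of "(u,z)" "(u,y)"] by (simp add: dist_Pair_Pair)
  qed
qed

lemma omega_ne:
  assumes "topological_flow \<psi> M" "compact M" "x \<in> M"
  shows "\<exists>y. y \<in> omega_limit \<psi> x"
proof -
  have "\<forall>n. \<psi> (real n) x \<in> M" using assms flow_in by blast
  then obtain l r where "l \<in> M" "strict_mono (r :: nat \<Rightarrow> nat)" and L: "((\<lambda>n. \<psi> (real n) x) \<circ> r) \<longlonglongrightarrow> l"
    by (rule seq_compactE[OF compact_imp_seq_compact[OF assms(2)], of "\<lambda>n. \<psi> (real n) x"]) auto
  have "filterlim (\<lambda>n. real (r n)) at_top sequentially"
    using filterlim_compose[OF filterlim_real_sequentially filterlim_subseq[OF \<open>strict_mono r\<close>]] by simp
  then have "(\<lambda>n. real (r n)) \<in> {t. filterlim t at_top sequentially \<and> ((\<lambda>n. \<psi> (t n) x) \<longlongrightarrow> l) sequentially}"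
    using L by (simp add: o_def)
  then show ?thesis unfolding omega_limit_def by blast
qed



lemma uniform_time:
  assumes fl: "topological_flow \<psi> M" and C: "compact C" "C \<subseteq> M" and G: "open G"
    and H: "\<forall>x\<in>C. \<exists>t\<ge>0. \<psi> t x \<in> G"
  shows "\<exists>T\<ge>0. \<forall>x\<in>C. \<exists>t\<in>{0..T}. \<psi> t x \<in> G"
proof -
  have "\<forall>x\<in>C. \<exists>t A. t \<ge> 0 \<and> open A \<and> x \<in> A \<and> (\<forall>y\<in>A \<inter> M. \<psi> t y \<in> G)"
  proof
    fix x assume x: "x \<in> C"
    then obtain t where t: "t \<ge> 0" "\<psi> t x \<in> G" using H by blast
    obtain A where A: "open A" "A \<inter> M = \<psi> t -` G \<inter> M"
      using flow_cont_t[OF fl, of t] G unfolding continuous_on_open_invariant by blast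
    have "x \<in> A" using A(2) t x C by blast
    then show "\<exists>t A. t \<ge> 0 \<and> open A \<and> x \<in> A \<and> (\<forall>y\<in>A \<inter> M. \<psi> t y \<in> G)"
      using A t by blast
  qed
  then obtain tf Af where tA: "\<forall>x\<in>C. tf x \<ge> 0 \<and> open (Af x) \<and> x \<in> Af x \<and> (\<forall>y\<in>Af x \<inter> M. \<psi> (tf x) y \<in> G)"
    by metis
  have "C \<subseteq> (\<Union>c\<in>C. Af c)" using tA by blast
  then obtain C' where C': "C' \<subseteq> C" "finite C'" "C \<subseteq> (\<Union>c\<in>C'. Af c)"
    using compactE_image[OF C(1), of C Af] tA by blast
  define T where "T = Max (insert 0 (tf ` C'))"
  have T0: "T \<ge> 0" unfolding T_def using C' by simp
  have Tle: "tf c \<le> T" if "c \<in> C'" for c unfolding T_def using C' that by simp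
  show ?thesis
  proof (intro exI[of _ T] conjI T0 ballI)
    fix x assume "x \<in> C"
    then obtain c where c: "c \<in> C'" "x \<in> Af c" using C' by blast
    then have "\<psi> (tf c) x \<in> G" using tA C' \<open>x \<in> C\<close> C(2) by blast
    moreover have "tf c \<in> {0..T}" using Tle[OF c(1)] tA C' c by auto
    ultimately show "\<exists>t\<in>{0..T}. \<psi> t x \<in> G" by blast
  qed
qed

definition follows :: "(real \<Rightarrow> 'a::metric_space \<Rightarrow> 'a) \<Rightarrow> (real \<Rightarrow> 'a) \<Rightarrow> real \<Rightarrow> real \<Rightarrow> bool" where
  "follows \<phi> \<xi> S \<eta> \<longleftrightarrow> (\<forall>t. \<forall>s\<in>{0..S}. dist (\<xi> (t + s)) (\<phi> s (\<xi> t)) < \<eta>)"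

lemma follow_nat:
  assumes fl: "topological_flow \<phi> M" and cM: "compact M"
  shows "\<forall>\<eta>>0. \<exists>d>0. \<forall>\<xi>. pseudotrajectory \<phi> M d \<xi> \<longrightarrow> follows \<phi> \<xi> (real n) \<eta>"
proof (induction n)
  case 0
  show ?case
  proof (intro allI impI exI[of _ 1])
    fix \<eta> :: real and \<xi> assume "\<eta> > 0"
    show "1 > (0::real) \<and> (\<forall>\<xi>. pseudotrajectory \<phi> M 1 \<xi> \<longrightarrow> follows \<phi> \<xi> (real 0) \<eta>)"
      using \<open>\<eta> > 0\<close> flow_0[OF fl] by (auto simp: follows_def pseudotrajectory_def)
  qed
next
  case (Suc n)
  show ?case
  proof (intro allI impI)
    fix \<eta> :: real assume e: "\<eta> > 0"
    obtain \<delta> where d: "\<delta> > 0" and U: "\<forall>u\<in>{0..1}. \<forall>y\<in>M. \<forall>z\<in>M. dist y z < \<delta> \<longrightarrow> dist (\<phi> u y) (\<phi> u z) < \<eta>/2"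
      using flow_unif[OF fl cM, of "\<eta>/2" 0 1] e by auto
    obtain d1 where d1: "d1 > 0" "\<forall>\<xi>. pseudotrajectory \<phi> M d1 \<xi> \<longrightarrow> follows \<phi> \<xi> (real n) (min \<delta> \<eta>)"
      using Suc.IH d e by (meson min_less_iff_conj)
    show "\<exists>d>0. \<forall>\<xi>. pseudotrajectory \<phi> M d \<xi> \<longrightarrow> follows \<phi> \<xi> (real (Suc n)) \<eta>"
    proof (intro exI[of _ "min d1 (\<eta>/2)"] conjI allI impI)
      show "min d1 (\<eta>/2) > 0" using d1 e by simp
      fix \<xi> assume ps: "pseudotrajectory \<phi> M (min d1 (\<eta>/2)) \<xi>"
      then have ps1: "pseudotrajectory \<phi> M d1 \<xi>" unfolding pseudotrajectory_def by force
      have F: "follows \<phi> \<xi> (real n) (min \<delta> \<eta>)" using d1 ps1 by blast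
      have inM: "\<xi> t \<in> M" for t using ps unfolding pseudotrajectory_def by blast
      have P: "dist (\<xi> (t + u)) (\<phi> u (\<xi> t)) < \<eta>/2" if "u \<in> {0..1}" for t u
        using ps that unfolding pseudotrajectory_def by force
      show "follows \<phi> \<xi> (real (Suc n)) \<eta>"
        unfolding follows_def
      proof (intro allI ballI)
        fix t s assume s: "s \<in> {0..real (Suc n)}"
        show "dist (\<xi> (t + s)) (\<phi> s (\<xi> t)) < \<eta>"
        proof (cases "s \<le> real n")
          case True
          then show ?thesis using F s unfolding follows_def by force
        next
          case False
          define u where "u = s - real n"
          have u: "u \<in> {0..1}" using False s unfolding u_def by auto
          have a: "dist (\<xi> (t + n + u)) (\<phi> u (\<xi> (t + n))) < \<eta>/2" using P[OF u] by simp
          have b: "dist (\<xi> (t + n)) (\<phi> n (\<xi> t)) < \<delta>" using F unfolding follows_def by force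
          have c: "dist (\<phi> u (\<xi> (t + n))) (\<phi> u (\<phi> n (\<xi> t))) < \<eta>/2"
            using U u inM flow_in[OF fl inM] b by blast
          have e2: "\<phi> u (\<phi> n (\<xi> t)) = \<phi> s (\<xi> t)" using flow_add[OF fl inM, of u "real n" t] u_def by simp
          have "t + s = t + n + u" unfolding u_def by simp
          then have a': "dist (\<xi> (t + s)) (\<phi> u (\<xi> (t + n))) < \<eta>/2" using a by (simp only:)
          have c': "dist (\<phi> u (\<xi> (t + n))) (\<phi> s (\<xi> t)) < \<eta>/2" using c e2 by simp
          show ?thesis using a' c' dist_triangle[of "\<xi> (t + s)" "\<phi> s (\<xi> t)" "\<phi> u (\<xi> (t + n))"] by linarith
        qed
      qed
    qed
  qed
qed

lemma follows_mono: "follows \<phi> \<xi> S \<eta> \<Longrightarrow> S' \<le> S \<Longrightarrow> \<eta> \<le> \<eta>' \<Longrightarrow> follows \<phi> \<xi> S' \<eta>'"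
  unfolding follows_def
proof (intro allI ballI)
  fix t s assume "\<forall>t. \<forall>s\<in>{0..S}. dist (\<xi> (t + s)) (\<phi> s (\<xi> t)) < \<eta>" "S' \<le> S" "\<eta> \<le> \<eta>'" "s \<in> {0..S'}"
  then show "dist (\<xi> (t + s)) (\<phi> s (\<xi> t)) < \<eta>'" by (meson atLeastAtMost_iff order_trans less_le_trans)
qed

lemma follow_fwd:
  assumes fl: "topological_flow \<phi> M" and cM: "compact M" and e: "\<eta> > 0"
  shows "\<exists>d>0. \<forall>\<xi>. pseudotrajectory \<phi> M d \<xi> \<longrightarrow> follows \<phi> \<xi> S \<eta>"
proof -
  obtain d where "d > 0" "\<forall>\<xi>. pseudotrajectory \<phi> M d \<xi> \<longrightarrow> follows \<phi> \<xi> (real (nat \<lceil>S\<rceil>)) \<eta>"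
    using follow_nat[OF fl cM, of "nat \<lceil>S\<rceil>"] e by blast
  moreover have "S \<le> real (nat \<lceil>S\<rceil>)" by linarith
  ultimately show ?thesis using follows_mono by blast
qed

lemma follow_bwd:
  assumes fl: "topological_flow \<phi> M" and cM: "compact M" and e: "\<eta> > 0"
  shows "\<exists>d>0. \<forall>\<xi>. pseudotrajectory \<phi> M d \<xi> \<longrightarrow> follows (\<lambda>t. \<phi> (-t)) (\<lambda>t. \<xi> (-t)) S \<eta>"
proof -
  obtain \<delta> where d: "\<delta> > 0" and U: "\<forall>u\<in>{-S..0}. \<forall>y\<in>M. \<forall>z\<in>M. dist y z < \<delta> \<longrightarrow> dist (\<phi> u y) (\<phi> u z) < \<eta>"
    using flow_unif[OF fl cM e, of "-S" 0] by auto
  obtain d where d0: "d > 0" and D: "\<forall>\<xi>. pseudotrajectory \<phi> M d \<xi> \<longrightarrow> follows \<phi> \<xi> S \<delta>"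
    using follow_fwd[OF fl cM d] by blast
  show ?thesis
  proof (intro exI[of _ d] conjI d0 allI impI)
    fix \<xi> assume ps: "pseudotrajectory \<phi> M d \<xi>"
    have inM: "\<xi> t \<in> M" for t using ps unfolding pseudotrajectory_def by blast
    have F: "follows \<phi> \<xi> S \<delta>" using D ps by blast
    show "follows (\<lambda>t. \<phi> (-t)) (\<lambda>t. \<xi> (-t)) S \<eta>"
      unfolding follows_def
    proof (intro allI ballI)
      fix t s assume s: "s \<in> {0..S}"
      have a: "dist (\<xi> (-(t+s) + s)) (\<phi> s (\<xi> (-(t+s)))) < \<delta>" using F s unfolding follows_def by blast
      have "dist (\<phi> (-s) (\<xi> (-(t+s) + s))) (\<phi> (-s) (\<phi> s (\<xi> (-(t+s))))) < \<eta>"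
        using U s inM flow_in[OF fl inM] a by force
      moreover have "\<phi> (-s) (\<phi> s (\<xi> (-(t+s)))) = \<xi> (-(t+s))"
        using flow_add[OF fl inM, of "-s" s] flow_0[OF fl inM] by simp
      ultimately show "dist (\<xi> (- (t + s))) (\<phi> (- s) (\<xi> (- t))) < \<eta>" by (simp add: dist_commute)
    qed
  qed
qed



lemma flow_rev:
  assumes fl: "topological_flow \<phi> M"
  shows "topological_flow (\<lambda>t. \<phi> (-t)) M"
proof -
  have c: "continuous_on (UNIV \<times> M) (\<lambda>(t, x). \<phi> t x)" using flow_cont[OF fl] .
  have "continuous_on (UNIV \<times> M) ((\<lambda>(t, x). \<phi> t x) \<circ> (\<lambda>(t, x). (-t, x)))"
  proof (rule continuous_on_compose)
    have "continuous_on (UNIV \<times> M) (\<lambda>z. (- (fst z :: real), snd z))"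
      by (intro continuous_on_Pair continuous_on_minus continuous_on_fst continuous_on_snd continuous_on_id)
    then show "continuous_on (UNIV \<times> M) (\<lambda>(t::real, x). (- t, x))"
      by (simp add: case_prod_unfold)
    have "(\<lambda>(t::real, x). (- t, x)) ` (UNIV \<times> M) \<subseteq> UNIV \<times> M" by auto
    then show "continuous_on ((\<lambda>(t::real, x). (- t, x)) ` (UNIV \<times> M)) (\<lambda>(t, x). \<phi> t x)"
      using continuous_on_subset[OF c] by blast
  qed
  then have "continuous_on (UNIV \<times> M) (\<lambda>(t, x). \<phi> (-t) x)"
    by (simp add: o_def case_prod_unfold)
  moreover have "\<forall>t. \<forall>x\<in>M. \<phi> (-t) x \<in> M" using flow_in[OF fl] by blast
  moreover have "\<forall>x\<in>M. \<phi> (-0) x = x" using flow_0[OF fl] by simp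
  moreover have "\<forall>s t. \<forall>x\<in>M. \<phi> (-(s + t)) x = \<phi> (-s) (\<phi> (-t) x)"
    using flow_add[OF fl] by (metis minus_add_distrib)
  ultimately show ?thesis unfolding topological_flow_def by blast
qed

lemma unstable_rev:
  assumes "lyapunov_unstable \<phi> M p"
  shows "lyapunov_stable (\<lambda>t. \<phi> (-t)) M p"
  unfolding lyapunov_stable_def
proof (intro allI impI)
  fix V assume "open V \<and> p \<in> V"
  then obtain U where U: "open U" "p \<in> U" "\<forall>x\<in>U \<inter> M. \<forall>t\<le>0. \<phi> t x \<in> V"
    using assms unfolding lyapunov_unstable_def by blast
  show "\<exists>U. open U \<and> p \<in> U \<and> (\<forall>x\<in>U \<inter> M. \<forall>t\<ge>0. \<phi> (- t) x \<in> V)"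
    using U by (intro exI[of _ U]) auto
qed

lemma omega_rev: "omega_limit (\<lambda>t. \<phi> (-t)) x \<subseteq> alpha_limit \<phi> x"
proof
  fix y assume "y \<in> omega_limit (\<lambda>t. \<phi> (-t)) x"
  then obtain t where t: "filterlim t at_top sequentially" "((\<lambda>n. \<phi> (- t n) x) \<longlongrightarrow> y) sequentially"
    unfolding omega_limit_def by blast
  have "filterlim (\<lambda>n. - t n) at_bot sequentially"
    using t(1) by (simp add: filterlim_uminus_at_bot)
  then have "(\<lambda>n. - t n) \<in> {t. filterlim t at_bot sequentially \<and> ((\<lambda>n. \<phi> (t n) x) \<longlongrightarrow> y) sequentially}"
    using t(2) by simp
  then show "y \<in> alpha_limit \<phi> x" unfolding alpha_limit_def by blast
qed

lemma attractor:
  assumes fl: "topological_flow \<psi> M" and cM: "compact M" and st: "lyapunov_stable \<psi> M p"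
    and \<rho>: "\<rho> > 0" and hL: "\<forall>x\<in>M. omega_limit \<psi> x \<subseteq> Ls"
    and iso: "\<forall>q\<in>Ls. dist p q \<le> \<rho> \<longrightarrow> q = p"
  shows "\<exists>r>0. r \<le> \<rho> \<and> (\<forall>x\<in>M. dist p x < 2*r \<longrightarrow> (\<forall>s\<ge>0. dist p (\<psi> s x) < \<rho>)) \<and>
     (\<exists>S \<eta>. \<eta> > 0 \<and> (\<forall>\<xi>. (\<forall>t. \<xi> t \<in> M) \<longrightarrow> follows \<psi> \<xi> S \<eta> \<longrightarrow>
        (\<forall>t. dist p (\<xi> t) < r \<longrightarrow> (\<forall>s\<ge>0. dist p (\<xi> (t + s)) < 2*\<rho>))))"
proof -
  obtain U where U: "open U" "p \<in> U" "\<forall>x\<in>U \<inter> M. \<forall>t\<ge>0. \<psi> t x \<in> ball p \<rho>"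
    using st[unfolded lyapunov_stable_def, rule_format, of "ball p \<rho>"] \<rho> by auto
  obtain r1 where r1: "r1 > 0" "ball p r1 \<subseteq> U" using openE[OF U(1,2)] by blast
  define R where "R = min r1 \<rho>"
  have R: "R > 0" "R \<le> r1" "R \<le> \<rho>" using r1 \<rho> unfolding R_def by auto
  have inU: "x \<in> U" if "dist p x < R" for x using r1 R that by auto
  obtain U' where U': "open U'" "p \<in> U'" "\<forall>x\<in>U' \<inter> M. \<forall>t\<ge>0. \<psi> t x \<in> ball p (R/4)"
    using st[unfolded lyapunov_stable_def, rule_format, of "ball p (R/4)"] R by auto
  obtain r3 where r3: "r3 > 0" "ball p r3 \<subseteq> U'" using openE[OF U'(1,2)] by blast
  define C where "C = M \<inter> cball p (R/2)"
  have cC: "compact C" unfolding C_def using cM by (simp add: compact_Int_closed)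
  have CM: "C \<subseteq> M" unfolding C_def by blast
  have hit: "\<forall>x\<in>C. \<exists>t\<ge>0. \<psi> t x \<in> ball p r3"
  proof
    fix x assume xC: "x \<in> C"
    then have xM: "x \<in> M" and xU: "x \<in> U" using CM inU R unfolding C_def by auto
    obtain y where "y \<in> omega_limit \<psi> x" using omega_ne[OF fl cM xM] by blast
    then obtain tn where tn: "filterlim tn at_top sequentially" "((\<lambda>n. \<psi> (tn n) x) \<longlongrightarrow> y) sequentially"
      and yL: "y \<in> Ls" using hL xM unfolding omega_limit_def by blast
    have ev0: "eventually (\<lambda>n. tn n \<ge> 0) sequentially"
      using tn(1) unfolding filterlim_at_top by blast
    have "eventually (\<lambda>n. \<psi> (tn n) x \<in> cball p \<rho>) sequentially"
      using ev0 by eventually_elim (use U(3) xU xM in \<open>fastforce intro: less_imp_le\<close>)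
    then have "y \<in> cball p \<rho>" using Lim_in_closed_set[OF closed_cball _ _ tn(2)] by simp
    then have yp: "y = p" using iso yL by simp
    have "eventually (\<lambda>n. \<psi> (tn n) x \<in> ball p r3) sequentially"
      using topological_tendstoD[OF tn(2) open_ball[of p r3]] r3 yp by simp
    then have ev1: "eventually (\<lambda>n. tn n \<ge> 0 \<and> \<psi> (tn n) x \<in> ball p r3) sequentially"
      using ev0 by eventually_elim auto
    obtain n where "tn n \<ge> 0 \<and> \<psi> (tn n) x \<in> ball p r3"
      using eventually_happens'[OF sequentially_bot ev1] by blast
    then show "\<exists>t\<ge>0. \<psi> t x \<in> ball p r3" by blast
  qed
  obtain T where T: "T \<ge> 0" "\<forall>x\<in>C. \<exists>t\<in>{0..T}. \<psi> t x \<in> ball p r3"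
    using uniform_time[OF fl cC CM open_ball hit] by blast
  have late: "dist p (\<psi> s x) < R/4" if "x \<in> C" "s \<ge> T" for x s
  proof -
    have "\<exists>t\<in>{0..T}. \<psi> t x \<in> ball p r3" using T(2) that(1) by (rule bspec)
    then obtain t where t: "t \<in> {0..T}" "\<psi> t x \<in> ball p r3" by (rule bexE)
    have xM: "x \<in> M" using that(1) CM by blast
    have "\<psi> t x \<in> U'" using t(2) r3(2) by blast
    then have "\<psi> t x \<in> U' \<inter> M" using flow_in[OF fl xM, of t] by blast
    moreover have "s - t \<ge> 0" using t(1) that(2) by simp
    ultimately have "\<psi> (s - t) (\<psi> t x) \<in> ball p (R/4)" using U'(3) by blast
    moreover have "\<psi> (s - t) (\<psi> t x) = \<psi> s x" using flow_add[OF fl xM, of "s - t" t] by simp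
    ultimately show ?thesis by simp
  qed
  show ?thesis
  proof (rule exI[of _ "R/2"], intro conjI)
    show "R/2 > 0" "R/2 \<le> \<rho>" using R by auto
    show "\<forall>x\<in>M. dist p x < 2 * (R / 2) \<longrightarrow> (\<forall>s\<ge>0. dist p (\<psi> s x) < \<rho>)"
      using inU U(3) by auto
    define T' where "T' = T + 1"
    have T': "T' > 0" "T' \<ge> T" unfolding T'_def using T by auto
    have "\<exists>S \<eta>. \<eta> > 0 \<and> (\<forall>\<xi>. (\<forall>t. \<xi> t \<in> M) \<longrightarrow> follows \<psi> \<xi> S \<eta> \<longrightarrow>
        (\<forall>t. dist p (\<xi> t) < R/2 \<longrightarrow> (\<forall>s\<ge>0. dist p (\<xi> (t + s)) < 2*\<rho>)))"
    proof -
    have RR: "R/4 > 0" using R by auto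
    have "\<forall>\<xi>. (\<forall>t. \<xi> t \<in> M) \<longrightarrow> follows \<psi> \<xi> T' (R/4) \<longrightarrow>
        (\<forall>t. dist p (\<xi> t) < R/2 \<longrightarrow> (\<forall>s\<ge>0. dist p (\<xi> (t + s)) < 2*\<rho>))"
    proof (intro allI impI)
      fix \<xi> and t s :: real assume inM: "\<forall>t. \<xi> t \<in> M" and F: "follows \<psi> \<xi> T' (R/4)"
        and st0: "dist p (\<xi> t) < R/2" and s: "s \<ge> 0"
      have step: "dist p (\<xi> (t' + T')) < R/2" if "dist p (\<xi> t') < R/2" for t'
      proof -
        have "\<xi> t' \<in> C" using that inM unfolding C_def by auto
        then have a: "dist p (\<psi> T' (\<xi> t')) < R/4" using late T' by blast
        have b: "dist (\<xi> (t' + T')) (\<psi> T' (\<xi> t')) < R/4" using F T' unfolding follows_def by auto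
        show ?thesis using a b dist_triangle[of p "\<xi> (t' + T')" "\<psi> T' (\<xi> t')"]
          by (simp add: dist_commute)
      qed
      have K: "dist p (\<xi> (t + real k * T')) < R/2" for k :: nat
      proof (induction k)
        case 0
        then show ?case using st0 by simp
      next
        case (Suc k)
        have "t + real (Suc k) * T' = (t + real k * T') + T'" by (simp add: algebra_simps)
        then show ?case using step[OF Suc.IH] by (simp only:)
      qed
      define k where "k = nat \<lfloor>s / T'\<rfloor>"
      have kk: "real k = of_int \<lfloor>s / T'\<rfloor>" unfolding k_def using s T' by simp
      have lo: "real k * T' \<le> s" using floor_divide_lower[OF T'(1), of s] kk by simp
      have hi: "s < (real k + 1) * T'" using floor_divide_upper[OF T'(1), of s] kk by simp
      define u where "u = s - real k * T'"
      have u: "u \<in> {0..T'}" using lo hi unfolding u_def by (auto simp: algebra_simps)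
      define t' where "t' = t + real k * T'"
      have a: "dist (\<xi> (t' + u)) (\<psi> u (\<xi> t')) < R/4" using F u unfolding follows_def by blast
      have "\<xi> t' \<in> U \<inter> M" using K[of k] inU inM R unfolding t'_def by auto
      then have b: "dist p (\<psi> u (\<xi> t')) < \<rho>" using U(3) u by auto
      have "t + s = t' + u" unfolding t'_def u_def by simp
      then have "dist p (\<xi> (t + s)) < \<rho> + R/4"
        using a b dist_triangle[of p "\<xi> (t' + u)" "\<psi> u (\<xi> t')"] by (simp add: dist_commute)
      then show "dist p (\<xi> (t + s)) < 2 * \<rho>" using R by linarith
    qed
    note HH = this
    show ?thesis apply (rule exI[of _ T'], rule exI[of _ "R/4"]) using RR HH by simp
    qed
    then show "\<exists>S \<eta>. \<eta> > 0 \<and> (\<forall>\<xi>. (\<forall>t. \<xi> t \<in> M) \<longrightarrow> follows \<psi> \<xi> S \<eta> \<longrightarrow>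
        (\<forall>t. dist p (\<xi> t) < R/2 \<longrightarrow> (\<forall>s\<ge>0. dist p (\<xi> (t + s)) < 2*\<rho>)))" by simp
  qed
qed



lemma shift_Rep: "(\<lambda>t. t - \<sigma>) \<in> Rep"
proof -
  have "homeomorphism UNIV UNIV (\<lambda>t::real. t - \<sigma>) (\<lambda>t. t + \<sigma>)"
    unfolding homeomorphism_def
  proof (intro conjI)
    show "range (\<lambda>t::real. t - \<sigma>) = UNIV"
      by (auto simp: image_iff intro!: exI[of _ "_ + \<sigma>"])
    show "range (\<lambda>t::real. t + \<sigma>) = UNIV"
      by (auto simp: image_iff intro!: exI[of _ "_ - \<sigma>"])
  qed (auto intro!: continuous_intros)
  moreover have "mono (\<lambda>t::real. t - \<sigma>)" by (auto simp: mono_def)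
  ultimately show ?thesis unfolding Rep_def by blast
qed

lemma pseudo_mono: "pseudotrajectory \<phi> M d \<xi> \<Longrightarrow> d \<le> d' \<Longrightarrow> pseudotrajectory \<phi> M d' \<xi>"
  unfolding pseudotrajectory_def by (meson less_le_trans)

lemma finite_pos_min:
  assumes "finite X" "\<forall>x\<in>X. (x::real) > 0"
  shows "\<exists>m>0. \<forall>x\<in>X. m \<le> x"
proof (intro exI[of _ "Min (insert 1 X)"] conjI ballI)
  show "Min (insert 1 X) > 0" using assms by (simp add: Min_gr_iff)
  fix x assume "x \<in> X" then show "Min (insert 1 X) \<le> x" using assms by simp
qed



theorem main_shadow:
  fixes \<phi> :: "real \<Rightarrow> 'a::metric_space \<Rightarrow> 'a" and M :: "'a set"
  assumes cM: "compact M" and fl: "topological_flow \<phi> M"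
    and finL: "finite (limit_set \<phi> M)"
    and hL: "\<forall>p\<in>limit_set \<phi> M. singularity \<phi> M p \<and>
           (lyapunov_stable \<phi> M p \<or> lyapunov_unstable \<phi> M p)"
  shows "oriented_shadowing \<phi> M"
  unfolding oriented_shadowing_def
proof (intro allI impI)
  fix \<epsilon> :: real assume \<epsilon>: "\<epsilon> > 0"
  show "\<exists>d>0. \<forall>\<xi>. pseudotrajectory \<phi> M d \<xi> \<longrightarrow> (\<exists>x\<in>M. \<exists>h\<in>Rep. \<forall>t. dist (\<xi> t) (\<phi> (h t) x) < \<epsilon>)"
  proof (cases "M = {}")
    case True
    show ?thesis
      by (rule exI[of _ 1]) (auto simp: pseudotrajectory_def True)
  next
    case False
    define Ls where "Ls = limit_set \<phi> M"
    define A where "A = {p\<in>Ls. lyapunov_stable \<phi> M p}"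
    define \<phi>' where "\<phi>' = (\<lambda>t. \<phi> (-t))"
    have fl': "topological_flow \<phi>' M" unfolding \<phi>'_def by (rule flow_rev[OF fl])
    have finLs: "finite Ls" using finL unfolding Ls_def .
    have AL: "A \<subseteq> Ls" unfolding A_def by blast
    have LM: "p \<in> M" if "p \<in> Ls" for p using hL that unfolding Ls_def singularity_def by blast
    have fixp: "\<phi> t p = p" if "p \<in> Ls" for p t using hL that unfolding Ls_def singularity_def by blast
    have unst: "lyapunov_unstable \<phi> M p" if "p \<in> Ls" "p \<notin> A" for p
      using hL that unfolding Ls_def A_def by blast
    have om: "\<forall>x\<in>M. omega_limit \<phi> x \<subseteq> Ls" unfolding Ls_def limit_set_def by blast
    have om': "\<forall>x\<in>M. omega_limit \<phi>' x \<subseteq> Ls"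
      using omega_rev[of \<phi>] unfolding Ls_def limit_set_def \<phi>'_def by blast
    obtain x0 where "x0 \<in> M" using False by blast
    then obtain y0 where "y0 \<in> omega_limit \<phi> x0" using omega_ne[OF fl cM] by blast
    then have LsNE: "Ls \<noteq> {}" using om \<open>x0 \<in> M\<close> by blast
    define Dset where "Dset = (\<lambda>(p, q). dist p q) ` {(p, q). p \<in> Ls \<and> q \<in> Ls \<and> p \<noteq> q}"
    have fin2: "finite (Ls \<times> Ls)" using finLs by simp
    have sub2: "{(p, q). p \<in> Ls \<and> q \<in> Ls \<and> p \<noteq> q} \<subseteq> Ls \<times> Ls" by blast
    have finD: "finite Dset" unfolding Dset_def by (rule finite_imageI[OF finite_subset[OF sub2 fin2]])
    have posD: "\<forall>x\<in>Dset. x > 0" unfolding Dset_def by clarsimp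
    obtain m where m: "m > 0" "\<forall>x\<in>Dset. m \<le> x"
      using finite_pos_min[OF finD posD] by blast
    define \<rho> where "\<rho> = min (\<epsilon>/4) (m/5)"
    have \<rho>: "\<rho> > 0" "\<rho> \<le> \<epsilon>/4" unfolding \<rho>_def using \<epsilon> m by auto
    have sep: "4 * \<rho> < dist p q" if "p \<in> Ls" "q \<in> Ls" "p \<noteq> q" for p q
    proof -
      have "dist p q \<in> Dset" unfolding Dset_def using that by force
      then have "m \<le> dist p q" using m(2) by blast
      then show ?thesis unfolding \<rho>_def using m by linarith
    qed
    have iso: "\<forall>q\<in>Ls. dist p q \<le> \<rho> \<longrightarrow> q = p" if "p \<in> Ls" for p
      using sep[OF that] \<rho> by force
    have uniq: "p = q" if "p \<in> Ls" "q \<in> Ls" "dist p y < 2*\<rho>" "dist q y < 2*\<rho>" for p q y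
    proof (rule ccontr)
      assume "p \<noteq> q"
      then have "4 * \<rho> < dist p q" using sep that by blast
      moreover have "dist p q \<le> dist p y + dist q y" using dist_triangle[of p q y] by (simp add: dist_commute)
      ultimately show False using that by linarith
    qed
    have "\<forall>p\<in>Ls. \<exists>r S \<eta>. r > 0 \<and> r \<le> \<rho> \<and> \<eta> > 0 \<and>
        (\<forall>x\<in>M. dist p x < 2*r \<longrightarrow> (\<forall>s\<ge>0. dist p ((if p \<in> A then \<phi> else \<phi>') s x) < \<rho>)) \<and>
        (\<forall>\<xi>. (\<forall>t. \<xi> t \<in> M) \<longrightarrow> follows (if p \<in> A then \<phi> else \<phi>') \<xi> S \<eta> \<longrightarrow>
          (\<forall>t. dist p (\<xi> t) < r \<longrightarrow> (\<forall>s\<ge>0. dist p (\<xi> (t + s)) < 2*\<rho>)))"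
    proof
      fix p assume pL: "p \<in> Ls"
      show "\<exists>r S \<eta>. r > 0 \<and> r \<le> \<rho> \<and> \<eta> > 0 \<and>
        (\<forall>x\<in>M. dist p x < 2*r \<longrightarrow> (\<forall>s\<ge>0. dist p ((if p \<in> A then \<phi> else \<phi>') s x) < \<rho>)) \<and>
        (\<forall>\<xi>. (\<forall>t. \<xi> t \<in> M) \<longrightarrow> follows (if p \<in> A then \<phi> else \<phi>') \<xi> S \<eta> \<longrightarrow>
          (\<forall>t. dist p (\<xi> t) < r \<longrightarrow> (\<forall>s\<ge>0. dist p (\<xi> (t + s)) < 2*\<rho>)))"
      proof (cases "p \<in> A")
        case True
        have st: "lyapunov_stable \<phi> M p" using True unfolding A_def by blast
        show ?thesis using attractor[OF fl cM st \<rho>(1) om iso[OF pL]] True by auto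
      next
        case False
        have st: "lyapunov_stable \<phi>' M p" unfolding \<phi>'_def by (rule unstable_rev[OF unst[OF pL False]])
        show ?thesis using attractor[OF fl' cM st \<rho>(1) om' iso[OF pL]] False by auto
      qed
    qed
    then obtain rf where "\<forall>p\<in>Ls. \<exists>S \<eta>. rf p > 0 \<and> rf p \<le> \<rho> \<and> \<eta> > 0 \<and>
        (\<forall>x\<in>M. dist p x < 2*rf p \<longrightarrow> (\<forall>s\<ge>0. dist p ((if p \<in> A then \<phi> else \<phi>') s x) < \<rho>)) \<and>
        (\<forall>\<xi>. (\<forall>t. \<xi> t \<in> M) \<longrightarrow> follows (if p \<in> A then \<phi> else \<phi>') \<xi> S \<eta> \<longrightarrow>
          (\<forall>t. dist p (\<xi> t) < rf p \<longrightarrow> (\<forall>s\<ge>0. dist p (\<xi> (t + s)) < 2*\<rho>)))"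
      by (rule bchoice[THEN exE]) blast
    then obtain Sf where "\<forall>p\<in>Ls. \<exists>\<eta>. rf p > 0 \<and> rf p \<le> \<rho> \<and> \<eta> > 0 \<and>
        (\<forall>x\<in>M. dist p x < 2*rf p \<longrightarrow> (\<forall>s\<ge>0. dist p ((if p \<in> A then \<phi> else \<phi>') s x) < \<rho>)) \<and>
        (\<forall>\<xi>. (\<forall>t. \<xi> t \<in> M) \<longrightarrow> follows (if p \<in> A then \<phi> else \<phi>') \<xi> (Sf p) \<eta> \<longrightarrow>
          (\<forall>t. dist p (\<xi> t) < rf p \<longrightarrow> (\<forall>s\<ge>0. dist p (\<xi> (t + s)) < 2*\<rho>)))"
      by (rule bchoice[THEN exE]) blast
    then obtain \<eta>f where loc: "\<forall>p\<in>Ls. rf p > 0 \<and> rf p \<le> \<rho> \<and> \<eta>f p > 0 \<and>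
        (\<forall>x\<in>M. dist p x < 2*rf p \<longrightarrow> (\<forall>s\<ge>0. dist p ((if p \<in> A then \<phi> else \<phi>') s x) < \<rho>)) \<and>
        (\<forall>\<xi>. (\<forall>t. \<xi> t \<in> M) \<longrightarrow> follows (if p \<in> A then \<phi> else \<phi>') \<xi> (Sf p) (\<eta>f p) \<longrightarrow>
          (\<forall>t. dist p (\<xi> t) < rf p \<longrightarrow> (\<forall>s\<ge>0. dist p (\<xi> (t + s)) < 2*\<rho>)))"
      by (rule bchoice[THEN exE]) blast
    define r0 where "r0 = Min (rf ` Ls)"
    define S0 where "S0 = Max (Sf ` Ls)"
    define \<eta>0 where "\<eta>0 = Min (\<eta>f ` Ls)"
    have r0: "r0 > 0" "r0 \<le> \<rho>" 
    proof -
      obtain p where "p \<in> Ls" using LsNE by blast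
      have "r0 \<le> rf p" unfolding r0_def using finLs \<open>p \<in> Ls\<close> by simp
      then show "r0 \<le> \<rho>" using loc \<open>p \<in> Ls\<close> by force
      show "r0 > 0" unfolding r0_def using finLs LsNE loc by simp
    qed
    have \<eta>0: "\<eta>0 > 0" unfolding \<eta>0_def using finLs LsNE loc by simp
    have r0le: "r0 \<le> rf p" "\<eta>0 \<le> \<eta>f p" "Sf p \<le> S0" if "p \<in> Ls" for p
      unfolding r0_def \<eta>0_def S0_def using finLs that by simp_all
    have ExA: "dist a (\<phi> s x) < \<rho>" if "a \<in> A" "x \<in> M" "dist a x < 2*r0" "s \<ge> 0" for a x s
    proof -
      have aL: "a \<in> Ls" using that AL by blast
      have "dist a x < 2 * rf a" using r0le[OF aL] that by linarith
      then show ?thesis using loc aL that by auto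
    qed
    have ExR: "dist p (\<phi> (-s) x) < \<rho>" if "p \<in> Ls" "p \<notin> A" "x \<in> M" "dist p x < 2*r0" "s \<ge> 0" for p x s
    proof -
      have "dist p x < 2 * rf p" using r0le[OF that(1)] that by linarith
      then show ?thesis using loc that unfolding \<phi>'_def by auto
    qed
    define K where "K = M \<inter> - (\<Union>p\<in>Ls. ball p r0)"
    define G where "G = (\<Union>a\<in>A. ball a (r0/2))"
    have cK: "compact K" unfolding K_def using cM by (intro compact_Int_closed) (auto intro!: open_Union)
    have KM: "K \<subseteq> M" unfolding K_def by blast
    have oG: "open G" unfolding G_def by auto
    have hitK: "\<forall>x\<in>K. \<exists>t\<ge>0. \<phi> t x \<in> G"
    proof
      fix x assume xK: "x \<in> K"
      then have xM: "x \<in> M" and far: "\<forall>p\<in>Ls. dist p x \<ge> r0" unfolding K_def by (auto simp: not_less)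
      obtain q where qo: "q \<in> omega_limit \<phi> x" using omega_ne[OF fl cM xM] by blast
      then have qL: "q \<in> Ls" using om xM by blast
      from qo obtain tn where tn: "filterlim tn at_top sequentially" "((\<lambda>n. \<phi> (tn n) x) \<longlongrightarrow> q) sequentially"
        unfolding omega_limit_def by blast
      have ev0: "eventually (\<lambda>n. tn n \<ge> 0) sequentially"
        using tn(1) unfolding filterlim_at_top by blast
      show "\<exists>t\<ge>0. \<phi> t x \<in> G"
      proof (cases "q \<in> A")
        case True
        have "eventually (\<lambda>n. \<phi> (tn n) x \<in> ball q (r0/2)) sequentially"
          using topological_tendstoD[OF tn(2) open_ball[of q "r0/2"]] r0 by simp
        then have ev1: "eventually (\<lambda>n. tn n \<ge> 0 \<and> \<phi> (tn n) x \<in> ball q (r0/2)) sequentially"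
          using ev0 by eventually_elim auto
        obtain n where n: "tn n \<ge> 0 \<and> \<phi> (tn n) x \<in> ball q (r0/2)"
          using eventually_happens'[OF sequentially_bot ev1] by blast
        have "\<phi> (tn n) x \<in> G" unfolding G_def using n True by blast
        then show ?thesis using n by blast
      next
        case False
        obtain U where U: "open U" "q \<in> U" "\<forall>y\<in>U \<inter> M. \<forall>t\<le>0. \<phi> t y \<in> ball q r0"
          using unst[OF qL False, unfolded lyapunov_unstable_def, rule_format, of "ball q r0"] r0 by auto
        have "eventually (\<lambda>n. \<phi> (tn n) x \<in> U) sequentially"
          using topological_tendstoD[OF tn(2) U(1,2)] .
        then have ev1: "eventually (\<lambda>n. tn n \<ge> 0 \<and> \<phi> (tn n) x \<in> U) sequentially"
          using ev0 by eventually_elim auto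
        obtain n where n: "tn n \<ge> 0 \<and> \<phi> (tn n) x \<in> U"
          using eventually_happens'[OF sequentially_bot ev1] by blast
        have "\<phi> (tn n) x \<in> U \<inter> M" using n flow_in[OF fl xM] by blast
        then have "\<phi> (- tn n) (\<phi> (tn n) x) \<in> ball q r0" using U(3) n by auto
        moreover have "\<phi> (- tn n) (\<phi> (tn n) x) = x"
          using flow_add[OF fl xM, of "- tn n" "tn n"] flow_0[OF fl xM] by simp
        ultimately have "dist q x < r0" by simp
        then show ?thesis using far qL by force
      qed
    qed
    obtain TK where TK: "TK \<ge> 0" "\<forall>x\<in>K. \<exists>t\<in>{0..TK}. \<phi> t x \<in> G"
      using uniform_time[OF fl cK KM oG hitK] by blast
    define Ss where "Ss = max S0 (TK + 1)"
    define \<eta>s where "\<eta>s = min \<eta>0 (min (r0/2) \<rho>)"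
    have \<eta>s: "\<eta>s > 0" "\<eta>s \<le> \<eta>0" "\<eta>s \<le> r0/2" "\<eta>s \<le> \<rho>"
      unfolding \<eta>s_def using \<eta>0 r0 \<rho> by auto
    obtain d1 where d1: "d1 > 0" "\<forall>\<xi>. pseudotrajectory \<phi> M d1 \<xi> \<longrightarrow> follows \<phi> \<xi> Ss \<eta>s"
      using follow_fwd[OF fl cM \<eta>s(1)] by blast
    obtain d2 where d2: "d2 > 0" "\<forall>\<xi>. pseudotrajectory \<phi> M d2 \<xi> \<longrightarrow> follows \<phi>' (\<lambda>t. \<xi> (-t)) Ss \<eta>s"
      using follow_bwd[OF fl cM \<eta>s(1)] unfolding \<phi>'_def by blast
    show ?thesis
    proof (rule exI[of _ "min d1 d2"], intro conjI allI impI)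
      show "min d1 d2 > 0" using d1 d2 by simp
      fix \<xi> assume ps: "pseudotrajectory \<phi> M (min d1 d2) \<xi>"
      have Ff: "follows \<phi> \<xi> Ss \<eta>s" using d1 pseudo_mono[OF ps] by simp
      have Fb: "follows \<phi>' (\<lambda>t. \<xi> (-t)) Ss \<eta>s" using d2 pseudo_mono[OF ps] by simp
      have inM: "\<forall>t. \<xi> t \<in> M" using ps unfolding pseudotrajectory_def by blast
      have inM': "\<forall>t. (\<lambda>t. \<xi> (-t)) t \<in> M" using inM by simp
      have TA: "dist a (\<xi> (t + s)) < 2*\<rho>" if "a \<in> A" "dist a (\<xi> t) < r0" "s \<ge> 0" for a t s
      proof -
        have aL: "a \<in> Ls" using that(1) AL by blast
        have F: "follows \<phi> \<xi> (Sf a) (\<eta>f a)"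
          using follows_mono[OF Ff] r0le[OF aL] \<eta>s Ss_def by simp
        have "dist a (\<xi> t) < rf a" using r0le[OF aL] that(2) by linarith
        then show ?thesis using loc aL that(1,3) F inM by auto
      qed
      have TR: "dist p (\<xi> (t - s)) < 2*\<rho>" if "p \<in> Ls" "p \<notin> A" "dist p (\<xi> t) < r0" "s \<ge> 0" for p t s
      proof -
        have F: "follows \<phi>' (\<lambda>t. \<xi> (-t)) (Sf p) (\<eta>f p)"
          using follows_mono[OF Fb] r0le[OF that(1)] \<eta>s Ss_def by simp
        have dd: "dist p (\<xi> (-(-t))) < rf p" using r0le[OF that(1)] that(3) by simp
        have L: "\<forall>\<xi>. (\<forall>t. \<xi> t \<in> M) \<longrightarrow> follows \<phi>' \<xi> (Sf p) (\<eta>f p) \<longrightarrow>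
          (\<forall>t. dist p (\<xi> t) < rf p \<longrightarrow> (\<forall>s\<ge>0. dist p (\<xi> (t + s)) < 2*\<rho>))"
          using loc that(1,2) by simp
        have L2: "(\<forall>t. \<xi> (-t) \<in> M) \<longrightarrow> follows \<phi>' (\<lambda>t. \<xi> (-t)) (Sf p) (\<eta>f p) \<longrightarrow>
          (\<forall>t'. dist p (\<xi> (-t')) < rf p \<longrightarrow> (\<forall>s\<ge>0. dist p (\<xi> (-(t' + s))) < 2*\<rho>))"
          using spec[OF L, of "\<lambda>t. \<xi> (-t)"] by simp
        have "dist p (\<xi> (-(-t + s))) < 2*\<rho>"
          using L2 inM F dd that(4) by blast
        then show ?thesis by simp
      qed
      have F3: "(\<exists>p\<in>Ls. dist p (\<xi> t) < r0) \<or> (\<exists>s\<in>{0..TK}. \<exists>a\<in>A. dist a (\<xi> (t + s)) < r0)" for t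
      proof (cases "\<exists>p\<in>Ls. dist p (\<xi> t) < r0")
        case True then show ?thesis by blast
      next
        case False
        then have "\<xi> t \<in> K" unfolding K_def using inM by auto
        then have "\<exists>s\<in>{0..TK}. \<phi> s (\<xi> t) \<in> G" by (rule bspec[OF TK(2)])
        then obtain s where s: "s \<in> {0..TK}" "\<phi> s (\<xi> t) \<in> G" by (rule bexE)
        then obtain a where a: "a \<in> A" "dist a (\<phi> s (\<xi> t)) < r0/2" unfolding G_def by auto
        have "s \<in> {0..Ss}" using s(1) unfolding Ss_def by auto
        then have "dist (\<xi> (t + s)) (\<phi> s (\<xi> t)) < \<eta>s" using Ff unfolding follows_def by blast
        then have "dist a (\<xi> (t + s)) < r0"
          using a(2) \<eta>s dist_triangle[of a "\<xi> (t + s)" "\<phi> s (\<xi> t)"] by (simp add: dist_commute)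
        then show ?thesis using s(1) a(1) by blast
      qed
      define HA where "HA = {t. \<exists>a\<in>A. dist a (\<xi> t) < r0}"
      have \<rho>\<epsilon>: "3 * \<rho> < \<epsilon>" using \<rho> \<epsilon> by linarith
      show "\<exists>x\<in>M. \<exists>h\<in>Rep. \<forall>t. dist (\<xi> t) (\<phi> (h t) x) < \<epsilon>"
      proof (cases "HA = {}")
        case True
        have allR: "\<exists>p\<in>Ls. p \<notin> A \<and> dist p (\<xi> t) < r0" for t
        proof -
          have "\<not> (\<exists>s\<in>{0..TK}. \<exists>a\<in>A. dist a (\<xi> (t + s)) < r0)" using True unfolding HA_def by blast
          then obtain p where p: "p \<in> Ls" "dist p (\<xi> t) < r0" using F3[of t] by blast
          have "p \<notin> A" using True p(2) unfolding HA_def by blast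
          then show ?thesis using p by blast
        qed
        obtain p0 where p0: "p0 \<in> Ls" "p0 \<notin> A" "dist p0 (\<xi> 0) < r0" using allR[of 0] by blast
        have near: "dist p0 (\<xi> t) < 2*\<rho>" for t
        proof -
          define t' where "t' = max t 0"
          obtain p where p: "p \<in> Ls" "p \<notin> A" "dist p (\<xi> t') < r0" using allR[of t'] by blast
          have "dist p (\<xi> (t' - t')) < 2*\<rho>" using TR[OF p, of t'] unfolding t'_def by simp
          moreover have "dist p0 (\<xi> 0) < 2*\<rho>" using p0(3) r0 by linarith
          ultimately have "p = p0" using uniq[OF p(1) p0(1)] by simp
          moreover have "dist p (\<xi> (t' - (t' - t))) < 2*\<rho>" using TR[OF p, of "t' - t"] unfolding t'_def by simp
          ultimately show ?thesis by simp
        qed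
        show ?thesis
        proof (intro bexI[of _ p0] bexI[of _ "\<lambda>t. t - 0"] allI)
          fix t
          have "dist (\<xi> t) (\<phi> (t - 0) p0) = dist p0 (\<xi> t)" using fixp[OF p0(1)] by (simp add: dist_commute)
          then show "dist (\<xi> t) (\<phi> (t - 0) p0) < \<epsilon>" using near[of t] \<rho>\<epsilon> \<rho> by linarith
        qed (use shift_Rep[of 0] LM[OF p0(1)] in auto)
      next
        case HAne: False
        show ?thesis
        proof (cases "bdd_below HA")
          case False
          obtain t0 where t0: "t0 \<in> HA" using HAne by blast
          then obtain a0 where a0: "a0 \<in> A" "dist a0 (\<xi> t0) < r0" unfolding HA_def by blast
          have a0L: "a0 \<in> Ls" using a0(1) AL by blast
          have near: "dist a0 (\<xi> t) < 2*\<rho>" for t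
          proof -
            obtain t' where t': "t' \<in> HA" "t' < min t t0"
              using False unfolding bdd_below_def by (meson not_le)
            then obtain a where a: "a \<in> A" "dist a (\<xi> t') < r0" unfolding HA_def by blast
            have aL: "a \<in> Ls" using a(1) AL by blast
            have "dist a (\<xi> (t' + (t0 - t'))) < 2*\<rho>" using TA[OF a, of "t0 - t'"] t' by simp
            moreover have "dist a0 (\<xi> t0) < 2*\<rho>" using a0(2) r0 by linarith
            ultimately have "a = a0" using uniq[OF aL a0L] by simp
            moreover have "dist a (\<xi> (t' + (t - t'))) < 2*\<rho>" using TA[OF a, of "t - t'"] t' by simp
            ultimately show ?thesis by simp
          qed
          show ?thesis
          proof (intro bexI[of _ a0] bexI[of _ "\<lambda>t. t - 0"] allI)
            fix t
            have "dist (\<xi> t) (\<phi> (t - 0) a0) = dist a0 (\<xi> t)" using fixp[OF a0L] by (simp add: dist_commute)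
            then show "dist (\<xi> t) (\<phi> (t - 0) a0) < \<epsilon>" using near[of t] \<rho>\<epsilon> \<rho> by linarith
          qed (use shift_Rep[of 0] LM[OF a0L] in auto)
        next
          case bdd: True
          define \<tau> where "\<tau> = Inf HA"
          have before: "t \<notin> HA" if "t < \<tau>" for t
            using cInf_lower[of t HA] bdd that unfolding \<tau>_def by force
          obtain \<tau>' where \<tau>': "\<tau>' \<in> HA" "\<tau>' < \<tau> + 1/2"
            using cInf_lessD[OF HAne, of "\<tau> + 1/2"] unfolding \<tau>_def by auto
          have "\<tau> \<le> \<tau>'" using \<tau>'(1) before by force
          define \<sigma> where "\<sigma> = \<tau> - TK - 1/2"
          have "\<not> (\<exists>s\<in>{0..TK}. \<exists>a\<in>A. dist a (\<xi> (\<sigma> + s)) < r0)"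
          proof
            assume "\<exists>s\<in>{0..TK}. \<exists>a\<in>A. dist a (\<xi> (\<sigma> + s)) < r0"
            then obtain s where s: "s \<in> {0..TK}" "\<sigma> + s \<in> HA" unfolding HA_def by blast
            have "\<sigma> + s < \<tau>" using s(1) unfolding \<sigma>_def by auto
            then show False using before s(2) by blast
          qed
          then obtain p where p: "p \<in> Ls" "dist p (\<xi> \<sigma>) < r0" using F3[of \<sigma>] by blast
          have "\<sigma> \<notin> HA" using before unfolding \<sigma>_def using TK(1) by simp
          then have pA: "p \<notin> A" using p unfolding HA_def by blast
          obtain a where a: "a \<in> A" "dist a (\<xi> \<tau>') < r0" using \<tau>'(1) unfolding HA_def by blast
          define x where "x = \<xi> \<sigma>"
          have xM: "x \<in> M" unfolding x_def using inM by blast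
          have \<tau>\<sigma>: "\<tau>' - \<sigma> \<in> {0..Ss}" using \<open>\<tau> \<le> \<tau>'\<close> \<tau>'(2) TK(1) unfolding \<sigma>_def Ss_def by auto
          define y where "y = \<phi> (\<tau>' - \<sigma>) x"
          have yM: "y \<in> M" unfolding y_def using flow_in[OF fl xM] .
          have "dist (\<xi> (\<sigma> + (\<tau>' - \<sigma>))) (\<phi> (\<tau>' - \<sigma>) (\<xi> \<sigma>)) < \<eta>s"
            using Ff \<tau>\<sigma> unfolding follows_def by blast
          then have "dist (\<xi> \<tau>') y < \<eta>s" unfolding y_def x_def by simp
          then have ay: "dist a y < 2 * r0"
            using a(2) \<eta>s dist_triangle[of a y "\<xi> \<tau>'"] by linarith
          show ?thesis
          proof (intro bexI[of _ x] bexI[of _ "\<lambda>t. t - \<sigma>"] allI)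
            fix t
            show "dist (\<xi> t) (\<phi> (t - \<sigma>) x) < \<epsilon>"
            proof (cases "t \<le> \<sigma>")
              case True
              have "dist p (\<xi> (\<sigma> - (\<sigma> - t))) < 2*\<rho>" using TR[OF p(1) pA p(2), of "\<sigma> - t"] True by simp
              then have 1: "dist p (\<xi> t) < 2*\<rho>" by simp
              have "dist p (\<phi> (- (\<sigma> - t)) x) < \<rho>"
                using ExR[OF p(1) pA xM, of "\<sigma> - t"] p(2) r0 True unfolding x_def by simp
              then have 2: "dist p (\<phi> (t - \<sigma>) x) < \<rho>" by simp
              show ?thesis using 1 2 \<rho>\<epsilon> dist_triangle[of "\<xi> t" "\<phi> (t - \<sigma>) x" p]
                by (simp add: dist_commute)
            next
              case False
              show ?thesis
              proof (cases "t \<le> \<tau>'")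
                case True
                have "t - \<sigma> \<in> {0..Ss}" using False True \<tau>\<sigma> by auto
                then have "dist (\<xi> (\<sigma> + (t - \<sigma>))) (\<phi> (t - \<sigma>) (\<xi> \<sigma>)) < \<eta>s"
                  using Ff unfolding follows_def by blast
                then show ?thesis using \<eta>s \<rho>\<epsilon> \<rho> unfolding x_def by simp
              next
                case False
                have "dist a (\<xi> (\<tau>' + (t - \<tau>'))) < 2*\<rho>" using TA[OF a, of "t - \<tau>'"] False by simp
                then have 1: "dist a (\<xi> t) < 2*\<rho>" by simp
                have "dist a (\<phi> (t - \<tau>') y) < \<rho>" using ExA[OF a(1) yM ay, of "t - \<tau>'"] False by simp
                moreover have "\<phi> (t - \<tau>') y = \<phi> (t - \<sigma>) x"
                  unfolding y_def using flow_add[OF fl xM, of "t - \<tau>'" "\<tau>' - \<sigma>"] by simp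
                ultimately have 2: "dist a (\<phi> (t - \<sigma>) x) < \<rho>" by simp
                show ?thesis using 1 2 \<rho>\<epsilon> dist_triangle[of "\<xi> t" "\<phi> (t - \<sigma>) x" a]
                  by (simp add: dist_commute)
              qed
            qed
          qed (auto simp: shift_Rep xM)
        qed
      qed
    qed
  qed
qed


theorem corollary1p3:
  fixes \<phi> :: "real \<Rightarrow> 'a::metric_space \<Rightarrow> 'a" and M :: "'a set"
  assumes "topological_manifold TYPE('n::euclidean_space) M"
    and "compact M"
    and "topological_flow \<phi> M"
    and "finite (limit_set \<phi> M)"
    and "\<forall>p\<in>limit_set \<phi> M. singularity \<phi> M p \<and>
           (lyapunov_stable \<phi> M p \<or> lyapunov_unstable \<phi> M p)"
  shows "oriented_shadowing \<phi> M"
  by (rule main_shadow[OF assms(2-5)])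

end
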